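(* Let $n,m$ be positive integers. For $\lambda=(\lambda_1,\dots,\lambda_n)\in\mathcal{P}^m_n$ define integers $k_{i,j}(\lambda)$, $1\le i\le j\le n$, recursively (in order of decreasing $i$, and for fixed $i$ in order of decreasing $j$) by $$k_{i,j}(\lambda)=\min\left\{m,\left\lceil\frac{\lambda_i-\sum_{\ell=j+1}^n k_{i,\ell}(\lambda)+\sum_{\ell=i+1}^j k_{\ell,j}(\lambda)}{j-i+1}\right\rceil\right\}.$$ Then the map $\bar\varphi_n:\mathcal{P}^m_n\to\mathcal{T}^m_n$ sending $\lambda$ to the tableau $\{k_{i,j}(\lambda):1\le i\le j\le n\}$ is injective.
   Context: $\mathcal{P}^m_n$ is the set of integer partitions $(\lambda_1\ge\cdots\ge\lambda_n\ge0)$ with $\lambda_i\le m(n-i+1)$ for all $i$. $\mathcal{T}^m_n$ is the set of fillings of the staircase Young diagram of shape $(n,n-1,\dots,1)$ by integers in $\{0,1,\dots,m\}$, where the entry $k_{i,j}$ occupies the box in row $i$, column $n-j+1$ ($1\le i\le j\le n$). *)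

theory Defs
  imports Complex_Main
begin

text \<open>A partition \<lambda> = (\<lambda>_1,...,\<lambda>_n) is a list of length n; \<lambda>_i is lam ! (i - 1).\<close>

definition partP :: "nat \<Rightarrow> nat \<Rightarrow> nat list set" where
  "partP m n = {lam. length lam = n \<and>
      (\<forall>i j. 1 \<le> i \<longrightarrow> i \<le> j \<longrightarrow> j \<le> n \<longrightarrow> lam ! (j - 1) \<le> lam ! (i - 1)) \<and>
      (\<forall>i. 1 \<le> i \<longrightarrow> i \<le> n \<longrightarrow> lam ! (i - 1) \<le> m * (n - i + 1))}"

definition tabT :: "nat \<Rightarrow> nat \<Rightarrow> (nat \<Rightarrow> nat \<Rightarrow> int) set" where
  "tabT m n = {k. (\<forall>i j. 1 \<le> i \<and> i \<le> j \<and> j \<le> n \<longrightarrow> 0 \<le> k i j \<and> k i j \<le> int m) \<and>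
      (\<forall>i j. \<not> (1 \<le> i \<and> i \<le> j \<and> j \<le> n) \<longrightarrow> k i j = 0)}"

function kval :: "nat \<Rightarrow> nat \<Rightarrow> nat list \<Rightarrow> nat \<Rightarrow> nat \<Rightarrow> int" where
  "kval m n lam i j =
     (if 1 \<le> i \<and> i \<le> j \<and> j \<le> n then
        min (int m)
          (\<lceil> real_of_int (int (lam ! (i - 1))
                 - (\<Sum>l\<in>{j+1..n}. kval m n lam i l)
                 + (\<Sum>l\<in>{i+1..j}. kval m n lam l j))
              / real (j - i + 1) \<rceil>)
      else 0)"
  by pat_completeness auto
termination
  by (relation "measures [\<lambda>(m,n,lam,i,j). n + 1 - i, \<lambda>(m,n,lam,i,j). n + 1 - j]") auto

definition phibar :: "nat \<Rightarrow> nat \<Rightarrow> nat list \<Rightarrow> (nat \<Rightarrow> nat \<Rightarrow> int)" where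
  "phibar m n lam = (\<lambda>i j. kval m n lam i j)"

end

theory Submission
  imports Defs
begin

declare kval.simps[simp del]

lemma ceil_ge: "0 < d \<Longrightarrow> x \<le> int d * \<lceil>real_of_int x / real d\<rceil>"
proof -
  assume d: "0 < d"
  have "real_of_int x / real d \<le> real_of_int \<lceil>real_of_int x / real d\<rceil>" by (rule le_of_int_ceiling)
  hence "(real_of_int x / real d) * real d \<le> real_of_int \<lceil>real_of_int x / real d\<rceil> * real d"
    by (rule mult_right_mono) auto
  hence "real_of_int x \<le> real_of_int \<lceil>real_of_int x / real d\<rceil> * real d"
    using d by simp
  hence "real_of_int x \<le> real d * real_of_int \<lceil>real_of_int x / real d\<rceil>"
    by (simp add: mult.commute)
  thus ?thesis by (metis of_int_le_iff of_int_mult of_int_of_nat_eq)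
qed

lemma ceil_le: "0 < d \<Longrightarrow> x \<le> int d * q + D \<Longrightarrow> 0 \<le> D \<Longrightarrow> \<lceil>real_of_int x / real d\<rceil> \<le> q + D"
proof -
  assume d: "0 < d" and h: "x \<le> int d * q + D" and D: "0 \<le> D"
  have "1 * D \<le> int d * D" using d D by (intro mult_right_mono) auto
  hence "int d * q + D \<le> int d * (q + D)" by (simp add: algebra_simps)
  hence "x \<le> int d * (q + D)" using h by linarith
  hence "real_of_int x \<le> real d * real_of_int (q + D)" by (metis of_int_le_iff of_int_mult of_int_of_nat_eq)
  hence "real_of_int x / real d \<le> real_of_int (q + D)" using d by (simp add: field_simps)
  thus ?thesis by (simp add: ceiling_le_iff)
qed

lemma ceil_nonneg: "0 \<le> x \<Longrightarrow> 0 \<le> \<lceil>real_of_int x / real d\<rceil>"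
proof -
  assume "0 \<le> x"
  hence "0 \<le> real_of_int x / real d" by simp
  thus ?thesis by (simp only: zero_le_ceiling)
qed

lemma sum_split: "a \<le> Suc j \<Longrightarrow> j \<le> b \<Longrightarrow> sum f {a..b} = sum f {a..j} + sum f {Suc j..(b::nat)}"
proof -
  assume "a \<le> Suc j" "j \<le> b"
  hence "{a..b} = {a..j} \<union> {Suc j..b}" by auto
  thus ?thesis by (simp add: sum.union_disjoint)
qed

context
  fixes m n :: nat and lam :: "nat list"
  assumes lamP: "lam \<in> partP m n"
begin

abbreviation k where "k i j \<equiv> kval m n lam i j"
abbreviation L where "L i \<equiv> int (lam ! (i - 1))"

lemma keq: "1 \<le> i \<Longrightarrow> i \<le> j \<Longrightarrow> j \<le> n \<Longrightarrow> k i j = min (int m)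
   (\<lceil> real_of_int (L i - (\<Sum>l\<in>{j+1..n}. k i l) + (\<Sum>l\<in>{i+1..j}. k l j)) / real (j - i + 1) \<rceil>)"
  by (subst kval.simps) simp

lemma kout: "\<not> (1 \<le> i \<and> i \<le> j \<and> j \<le> n) \<Longrightarrow> k i j = 0"
  by (subst kval.simps) (rule if_not_P)

lemma Lmono: "1 \<le> i \<Longrightarrow> i \<le> j \<Longrightarrow> j \<le> n \<Longrightarrow> L j \<le> L i"
  using lamP unfolding partP_def by auto

lemma Lbound: "1 \<le> i \<Longrightarrow> i \<le> n \<Longrightarrow> L i \<le> int m * int (n - i + 1)"
proof -
  assume "1 \<le> i" "i \<le> n"
  hence "lam ! (i - 1) \<le> m * (n - i + 1)" using lamP unfolding partP_def by auto
  hence "int (lam ! (i - 1)) \<le> int (m * (n - i + 1))" by (simp only: of_nat_le_iff)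
  thus ?thesis by (simp only: of_nat_mult)
qed

definition P where "P i \<longleftrightarrow> (\<forall>j. i \<le> j \<and> j \<le> n \<longrightarrow> 0 \<le> k i j \<and> k i j \<le> int m) \<and>
   (\<Sum>l\<in>{i..n}. k i l) = L i"

lemma main: "1 \<le> i \<Longrightarrow> i \<le> n \<Longrightarrow> P i"
proof (induction "n - i" arbitrary: i rule: less_induct)
  case less
  have IH: "P i'" if "i < i'" "i' \<le> n" for i'
    using less.hyps[of i'] that less.prems by auto
  have knn: "0 \<le> k l j" if "i < l" for l j
  proof (cases "1 \<le> l \<and> l \<le> j \<and> j \<le> n")
    case True thus ?thesis using IH[of l] that unfolding P_def by auto
  next
    case False thus ?thesis using kout by simp
  qed
  show "P i"
  proof (cases "i = n")
    case True
    have "k n n = min (int m) \<lceil>real_of_int (L n) / 1\<rceil>"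
      using keq[of n n] less.prems True by simp
    also have "\<dots> = L n" using Lbound[of n] less.prems True by simp
    finally have kn: "k n n = L n" .
    have "0 \<le> L n" by simp
    thus ?thesis unfolding P_def using True kn Lbound[of n] less.prems by auto
  next
    case False
    hence iln: "i < n" using less.prems by simp
    define T where "T j = L i - (\<Sum>l\<in>{j+1..n}. k i l)" for j
    define U where "U j = L (i+1) - (\<Sum>l\<in>{j+1..n}. k (i+1) l)" for j
    have Pi1: "P (i+1)" using IH iln by simp
    have U0: "0 \<le> U j" if "i \<le> j" "j \<le> n" for j
    proof -
      have "(\<Sum>l\<in>{i+1..n}. k (i+1) l) = (\<Sum>l\<in>{i+1..j}. k (i+1) l) + (\<Sum>l\<in>{Suc j..n}. k (i+1) l)"
        using that by (intro sum_split) auto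
      moreover have "(\<Sum>l\<in>{i+1..n}. k (i+1) l) = L (i+1)" using Pi1 unfolding P_def by simp
      moreover have "0 \<le> (\<Sum>l\<in>{i+1..j}. k (i+1) l)" by (intro sum_nonneg knn) simp
      ultimately show ?thesis unfolding U_def by simp
    qed
    have Ui: "U i = 0" using Pi1 unfolding P_def U_def by simp
    have Tstep: "T j = T (Suc j) - k i (Suc j)" if "j < n" for j
      using that unfolding T_def by (simp add: sum.atLeast_Suc_atMost)
    have Ustep: "U j = U (Suc j) - k (i+1) (Suc j)" if "j < n" for j
      using that unfolding U_def by (simp add: sum.atLeast_Suc_atMost)
    have kij: "k i j = min (int m) \<lceil>real_of_int (T j + (\<Sum>l\<in>{i+1..j}. k l j)) / real (j-i+1)\<rceil>"
      if "i \<le> j" "j \<le> n" for j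
      using keq[of i j] that less.prems unfolding T_def by simp
    have ki1: "k (i+1) j = min (int m) \<lceil>real_of_int (U j + (\<Sum>l\<in>{i+2..j}. k l j)) / real (j-i)\<rceil>"
      if "i < j" "j \<le> n" for j
    proof -
      have "k (i+1) j = min (int m) \<lceil>real_of_int (L (i+1) - (\<Sum>l\<in>{j+1..n}. k (i+1) l) + (\<Sum>l\<in>{i+1+1..j}. k l j)) / real (j-(i+1)+1)\<rceil>"
        using keq[of "i+1" j] that by simp
      moreover have "j - (i+1) + 1 = j - i" using that by simp
      moreover have "i+1+1 = i+2" by simp
      ultimately show ?thesis unfolding U_def by simp
    qed
    have Csplit: "(\<Sum>l\<in>{i+1..j}. k l j) = k (i+1) j + (\<Sum>l\<in>{i+2..j}. k l j)" if "i < j" for j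
      using that by (simp add: sum.atLeast_Suc_atMost)
    have C2nn: "0 \<le> (\<Sum>l\<in>{i+2..j}. k l j)" for j by (intro sum_nonneg knn) simp
    have C1nn: "0 \<le> (\<Sum>l\<in>{i+1..j}. k l j)" for j by (intro sum_nonneg knn) simp
    have inv: "U j \<le> T j \<and> T j \<le> int m * int (j - i + 1)" if "i \<le> j" "j \<le> n" for j
      using that(2,1)
    proof (induction j rule: inc_induct)
      case base
      have "T n = L i" "U n = L (i+1)" unfolding T_def U_def by simp_all
      thus ?case using Lmono[of i "i+1"] Lbound[of i] less.prems iln by simp
    next
      case (step j)
      have ij: "i \<le> j" using step.prems by simp
      define j' where "j' = Suc j"
      have jn: "j' \<le> n" "i < j'" using step.hyps ij j'_def by auto
      define q where "q = k (i+1) j'"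
      define C2 where "C2 = (\<Sum>l\<in>{i+2..j'}. k l j')"
      define kk where "kk = k i j'"
      define e where "e = int (j - i)"
      have e0: "0 \<le> e" unfolding e_def by simp
      have IH0: "U j' \<le> T j' \<and> T j' \<le> int m * int (j' - i + 1)"
        using step.IH ij unfolding j'_def by auto
      have "int (j' - i + 1) = e + 2" unfolding e_def j'_def using ij by simp
      hence IHj: "U j' \<le> T j'" "T j' \<le> int m * (e + 2)" using IH0 by (simp_all add: add.commute)
      have s1: "(\<Sum>l\<in>{i+1..j'}. k l j') = q + C2"
        unfolding q_def C2_def using Csplit[of j'] jn by simp
      have s2: "j' - i + 1 = Suc (Suc (j - i))" using ij unfolding j'_def by simp
      have ij': "i \<le> j'" using jn by simp
      have kk_eq: "kk = min (int m) \<lceil>real_of_int (T j' + (q + C2)) / real (Suc (Suc (j - i)))\<rceil>"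
        unfolding kk_def using kij[OF ij' jn(1)] unfolding s1 s2 .
      have q_eq: "q = min (int m) \<lceil>real_of_int (U j' + C2) / real (Suc (j - i))\<rceil>"
        unfolding q_def C2_def using ki1[of j'] jn ij by (simp add: j'_def Suc_diff_le)
      have q0: "0 \<le> q" unfolding q_def by (rule knn) simp
      have C20: "0 \<le> C2" unfolding C2_def by (rule C2nn)
      have c1: "kk \<le> q + (T j' - U j')"
      proof (cases "q = int m")
        case True thus ?thesis using kk_eq IHj by simp
      next
        case False
        hence qc: "q = \<lceil>real_of_int (U j' + C2) / real (Suc (j - i))\<rceil>" using q_eq by linarith
        have "U j' + C2 \<le> int (Suc (j - i)) * q" unfolding qc by (rule ceil_ge) simp
        hence "T j' + (q + C2) \<le> int (Suc (Suc (j - i))) * q + (T j' - U j')" by (simp add: algebra_simps)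
        hence "\<lceil>real_of_int (T j' + (q + C2)) / real (Suc (Suc (j - i)))\<rceil> \<le> q + (T j' - U j')"
          using IHj by (intro ceil_le) auto
        thus ?thesis using kk_eq by linarith
      qed
      have c2: "T j' - kk \<le> int m * (e + 1)"
      proof (cases "kk = int m")
        case True thus ?thesis using IHj by (simp add: algebra_simps)
      next
        case False
        hence kc: "kk = \<lceil>real_of_int (T j' + (q + C2)) / real (Suc (Suc (j - i)))\<rceil>" using kk_eq by linarith
        have x: "T j' + (q + C2) \<le> int (Suc (Suc (j - i))) * kk" unfolding kc by (rule ceil_ge) simp
        hence x': "T j' + (q + C2) \<le> (e + 2) * kk" unfolding e_def by (simp add: add.commute)
        have "(e+2) * (T j' - kk) = (e+2) * T j' - (e+2) * kk" by (simp add: algebra_simps)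
        also have "\<dots> \<le> (e+2) * T j' - (T j' + (q + C2))" using x' by linarith
        also have "\<dots> \<le> (e+1) * T j'" using q0 C20 by (simp add: algebra_simps)
        also have "\<dots> \<le> (e+1) * (int m * (e + 2))" using IHj e0 by (intro mult_left_mono) auto
        also have "\<dots> = (e+2) * (int m * (e+1))" by (simp add: algebra_simps)
        finally show ?thesis using e0 by (simp add: mult_le_cancel_left_pos)
      qed
      have "T j = T j' - kk" "U j = U j' - q"
        using Tstep[of j] Ustep[of j] step.hyps unfolding j'_def kk_def q_def by auto
      moreover have "int (j - i + 1) = e + 1" unfolding e_def using ij by simp
      ultimately show ?case using c1 c2 by (simp add: algebra_simps)
    qed
    have kbd: "0 \<le> k i j \<and> k i j \<le> int m" if "i \<le> j" "j \<le> n" for j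
    proof -
      have "0 \<le> T j" using inv[OF that] U0[OF that] by linarith
      hence "0 \<le> \<lceil>real_of_int (T j + (\<Sum>l\<in>{i+1..j}. k l j)) / real (j-i+1)\<rceil>"
        using C1nn[of j] by (intro ceil_nonneg) linarith
      thus ?thesis using kij[OF that] by simp
    qed
    have Tii: "T i = k i i"
    proof -
      have "0 \<le> T i" "T i \<le> int m" using inv[of i] Ui iln by auto
      moreover have "k i i = min (int m) \<lceil>real_of_int (T i) / 1\<rceil>" using kij[of i] iln by simp
      ultimately show ?thesis by simp
    qed
    have "(\<Sum>l\<in>{i..n}. k i l) = k i i + (\<Sum>l\<in>{i+1..n}. k i l)"
      using iln by (simp add: sum.atLeast_Suc_atMost)
    also have "\<dots> = L i" using Tii unfolding T_def by simp
    finally show ?thesis unfolding P_def using kbd by auto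
  qed
qed

end

theorem theorem4p2:
  fixes m n :: nat
  assumes "0 < n" and "0 < m"
  shows "phibar m n ` partP m n \<subseteq> tabT m n \<and> inj_on (phibar m n) (partP m n)"
proof
  show "phibar m n ` partP m n \<subseteq> tabT m n"
  proof
    fix t assume "t \<in> phibar m n ` partP m n"
    then obtain lam where lam: "lam \<in> partP m n" and t: "t = phibar m n lam" by auto
    have "0 \<le> kval m n lam i j \<and> kval m n lam i j \<le> int m" if "1 \<le> i \<and> i \<le> j \<and> j \<le> n" for i j
      using main[OF lam, of i] that unfolding P_def[OF lam] by auto
    moreover have "kval m n lam i j = 0" if "\<not> (1 \<le> i \<and> i \<le> j \<and> j \<le> n)" for i j
      using kout[OF lam that] .
    ultimately show "t \<in> tabT m n" unfolding t tabT_def phibar_def by blast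
  qed
next
  show "inj_on (phibar m n) (partP m n)"
  proof (rule inj_onI)
    fix a b assume a: "a \<in> partP m n" and b: "b \<in> partP m n" and e: "phibar m n a = phibar m n b"
    have ke: "kval m n a = kval m n b" using e unfolding phibar_def by (intro ext) metis
    have la: "length a = n" "length b = n" using a b unfolding partP_def by auto
    show "a = b"
    proof (rule nth_equalityI)
      show "length a = length b" using la by simp
      fix p assume "p < length a"
      hence p: "1 \<le> Suc p" "Suc p \<le> n" using la by auto
      have "int (a ! (Suc p - 1)) = (\<Sum>l\<in>{Suc p..n}. kval m n a (Suc p) l)"
        using main[OF a p] unfolding P_def[OF a] by simp
      also have "\<dots> = (\<Sum>l\<in>{Suc p..n}. kval m n b (Suc p) l)" using ke by simp
      also have "\<dots> = int (b ! (Suc p - 1))"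
        using main[OF b p] unfolding P_def[OF b] by simp
      finally show "a ! p = b ! p" by simp
    qed
  qed
qed

end
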